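(* Let $F_1(v)=\frac{1-e^{-v}}{v}$ for real $v\ne0$ and $F_1(0)=1$, and for $j\in\mathbb{N}$ let $G_j(v)=\frac{v^j}{1-e^{-v}}$ for $v\ne0$, $G_j(0)=1$ if $j=1$ and $G_j(0)=0$ if $j>1$; let $f_j=G_j^{(j)}$. For $j\in\mathbb{N}$ and $k\ge0$, \[ G_j^{(k)}(v)=\frac{(-1)^k}{F_1^{k+1}(v)}\det M_{k}(v), \] where $M_k(v)=(m_{i,\ell})_{1\le i,\ell\le k+1}$ is the $(k+1)\times(k+1)$ matrix with first column $m_{i,1}=\langle j-1\rangle_{i-1}v^{j-i}$ ($1\le i\le k+1$) and, for $2\le\ell\le k+1$, $m_{i,\ell}=\binom{i-1}{\ell-2}F_1^{(i-\ell+1)}(v)$ if $i\ge \ell-1$ and $m_{i,\ell}=0$ if $i<\ell-1$. That is, the rows are $(\langle j-1\rangle_0 v^{j-1}, F_1, 0,\dots,0)$, $(\langle j-1\rangle_1 v^{j-2}, F_1', F_1,0,\dots,0)$, $\dots$, $(\langle j-1\rangle_k v^{j-k-1}, F_1^{(k)}, \binom{k}{1}F_1^{(k-1)},\dots,\binom{k}{k-1}F_1')$. In particular, $f_j(v)=\frac{(-1)^j}{F_1^{j+1}(v)}\det M_j(v)$ (whose first column is $(\langle j-1\rangle_0v^{j-1},\dots,\langle j-1\rangle_{j-2}v,(j-1)!,0)^T$), $G_j^{(k)}(0)=0$ for $0\le k<j-1$, and $G_j^{(j-1)}(0)=(j-1)!$, $G_j^{(j)}(0)=f_j(0)=\frac{j!}{2}$,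 $G_j^{(j+1)}(0)=f_j'(0)=\frac{(j+1)!}{12}$, $G_j^{(j+2)}(0)=0$.
   Context: $\mathbb{N}=\{1,2,3,\dots\}$. The falling factorial is $\langle x\rangle_n=x(x-1)\cdots(x-n+1)$ for $n\ge1$, $\langle x\rangle_0=1$; note $\langle j-1\rangle_{n}=0$ for integers $n\ge j$, and entries $\langle j-1\rangle_{i-1}v^{j-i}$ with $i-1\ge j$ are understood to be $0$ (also at $v=0$). $F_1$ and $G_j$ are real-analytic on $(-2\pi,2\pi)$ and $F_1$ has no real zeros. *)

theory Defs
  imports "HOL-Analysis.Derivative" "Jordan_Normal_Form.Determinant"
begin

definition falling :: "real \<Rightarrow> nat \<Rightarrow> real" where
  "falling x n = (\<Prod>i<n. x - real i)"

definition F1 :: "real \<Rightarrow> real" where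
  "F1 v = (if v = 0 then 1 else (1 - exp (- v)) / v)"

definition G :: "nat \<Rightarrow> real \<Rightarrow> real" where
  "G j v = (if v = 0 then (if j = 1 then 1 else 0) else v ^ j / (1 - exp (- v)))"

definition f :: "nat \<Rightarrow> real \<Rightarrow> real" where
  "f j = (deriv ^^ j) (G j)"

text \<open>The (k+1) x (k+1) matrix M_k(v), 0-indexed rows i and columns l in {0..k}.\<close>
definition M :: "nat \<Rightarrow> nat \<Rightarrow> real \<Rightarrow> real mat" where
  "M j k v = mat (k+1) (k+1) (\<lambda>(i, l).
     if l = 0 then (if i < j then falling (real j - 1) i * v ^ (j - 1 - i) else 0)
     else if l - 1 \<le> i then real (i choose (l - 1)) * (deriv ^^ (i + 1 - l)) F1 v
     else 0)"

end

theory Submission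
  imports Defs
begin

definition Ck :: "nat \<Rightarrow> (real \<Rightarrow> real) \<Rightarrow> bool" where
  "Ck n p \<longleftrightarrow> (\<forall>m<n. \<forall>x. ((deriv^^m) p has_real_derivative (deriv^^(Suc m)) p x) (at x))"

lemma Ck_0[simp]: "Ck 0 p" by (simp add: Ck_def)

lemma Ck_Suc: "Ck (Suc n) p \<longleftrightarrow> (\<forall>x. (p has_real_derivative deriv p x) (at x)) \<and> Ck n (deriv p)"
  unfolding Ck_def
  apply (auto simp: less_Suc_eq_0_disj funpow_Suc_right simp del: funpow.simps)
  done

lemma Ck_SucI:
  assumes "\<And>x. (p has_real_derivative p' x) (at x)" "Ck n p'"
  shows "Ck (Suc n) p"
proof -
  have "deriv p = p'" using assms(1) by (intro ext DERIV_imp_deriv) auto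
  then show ?thesis using assms by (simp add: Ck_Suc)
qed

lemma Ck_SucD:
  assumes "\<And>x. (p has_real_derivative p' x) (at x)" "Ck (Suc n) p"
  shows "Ck n p'"
proof -
  have "deriv p = p'" using assms(1) by (intro ext DERIV_imp_deriv) auto
  then show ?thesis using assms by (simp add: Ck_Suc)
qed

lemma Ck_deriv: "Ck (Suc n) p \<Longrightarrow> (p has_real_derivative deriv p x) (at x)"
  by (simp add: Ck_Suc)

lemma Ck_mono: "Ck n p \<Longrightarrow> m \<le> n \<Longrightarrow> Ck m p"
  by (auto simp: Ck_def)

lemma Ck_const: "Ck n (\<lambda>x. c)"
proof (induction n arbitrary: c)
  case (Suc n) then show ?case by (intro Ck_SucI[where p'="\<lambda>x. 0"]) auto
qed simp

lemma Ck_id: "Ck n (\<lambda>x. x)"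
proof (cases n)
  case (Suc m)
  have "Ck (Suc m) (\<lambda>x. x)" by (rule Ck_SucI[where p'="\<lambda>x. 1"]) (auto intro: Ck_const)
  then show ?thesis using Suc by simp
qed simp

lemma Ck_add: "Ck n p \<Longrightarrow> Ck n q \<Longrightarrow> Ck n (\<lambda>x. p x + q x)"
proof (induction n arbitrary: p q)
  case (Suc n)
  show ?case
    apply (rule Ck_SucI[where p'="\<lambda>x. deriv p x + deriv q x"])
    using Suc by (auto simp: Ck_Suc intro!: derivative_eq_intros)
qed simp

lemma Ck_mult: "Ck n p \<Longrightarrow> Ck n q \<Longrightarrow> Ck n (\<lambda>x. p x * q x)"
proof (induction n arbitrary: p q)
  case (Suc n)
  have a: "Ck n p" "Ck n q" using Suc.prems Ck_mono by auto
  have b: "Ck n (deriv p)" "Ck n (deriv q)" using Suc.prems by (auto simp: Ck_Suc)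
  show ?case
    apply (rule Ck_SucI[where p'="\<lambda>x. deriv p x * q x + p x * deriv q x"])
    using Suc.prems apply (auto simp: Ck_Suc intro!: derivative_eq_intros)[1]
    using a b Suc.IH by (intro Ck_add) auto
qed simp

lemma Ck_inverse: "Ck n p \<Longrightarrow> (\<And>x. p x \<noteq> 0) \<Longrightarrow> Ck n (\<lambda>x. inverse (p x))"
proof (induction n arbitrary: p)
  case (Suc n)
  have a: "Ck n p" using Suc.prems Ck_mono by auto
  have b: "Ck n (deriv p)" using Suc.prems by (auto simp: Ck_Suc)
  have c: "Ck n (\<lambda>x. inverse (p x))" using Suc.IH a Suc.prems by auto
  show ?case
    apply (rule Ck_SucI[where p'="\<lambda>x. (-1) * (deriv p x * (inverse (p x) * inverse (p x)))"])
    using Suc.prems apply (auto simp: Ck_Suc power2_eq_square intro!: derivative_eq_intros)[1]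
    using b c by (intro Ck_mult Ck_const) auto
qed simp

lemma Ck_power: "Ck n (\<lambda>x. x ^ k)"
  by (induction k) (auto intro: Ck_mult Ck_id Ck_const)

lemma powser_deriv:
  fixes c :: "nat \<Rightarrow> real"
  assumes "\<And>y. summable (\<lambda>n. c n * y ^ n)"
  shows "deriv (\<lambda>x. \<Sum>n. c n * x^n) = (\<lambda>x. \<Sum>n. diffs c n * x^n)"
  by (intro ext DERIV_imp_deriv termdiffs_strong_converges_everywhere assms)

lemma powser_higher:
  fixes c :: "nat \<Rightarrow> real"
  assumes "\<And>y. summable (\<lambda>n. c n * y ^ n)"
  shows "(deriv^^k) (\<lambda>x. \<Sum>n. c n * x^n) = (\<lambda>x. \<Sum>n. (diffs^^k) c n * x^n)"
  using assms
proof (induction k arbitrary: c)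
  case (Suc k)
  have "summable (\<lambda>n. diffs c n * y ^ n)" for y using termdiff_converges_all Suc.prems by blast
  then show ?case using Suc
    by (simp only: funpow_Suc_right o_def powser_deriv)
qed simp

lemma Ck_powser:
  fixes c :: "nat \<Rightarrow> real"
  assumes "\<And>y. summable (\<lambda>n. c n * y ^ n)"
  shows "Ck m (\<lambda>x. \<Sum>n. c n * x^n)"
  using assms
proof (induction m arbitrary: c)
  case (Suc m)
  have "summable (\<lambda>n. diffs c n * y ^ n)" for y using termdiff_converges_all Suc.prems by blast
  then show ?case using Suc
    by (intro Ck_SucI[OF termdiffs_strong_converges_everywhere]) auto
qed simp

lemma diffs_iter: "(diffs^^k) c n = fact (n+k) / fact n * (c (n+k) :: real)"
proof (induction k arbitrary: n)
  case (Suc k)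
  have "(diffs^^Suc k) c n = real (Suc n) * ((diffs^^k) c (Suc n))"
    by (simp add: diffs_def)
  also have "\<dots> = real (Suc n) * (fact (Suc n+k) / fact (Suc n) * c (Suc n+k))" by (simp only: Suc)
  also have "\<dots> = fact (n + Suc k) / fact n * c (n + Suc k)"
    by (simp add: field_simps del: of_nat_Suc)
  finally show ?case .
qed simp


definition smooth :: "(real \<Rightarrow> real) \<Rightarrow> bool" where "smooth p \<longleftrightarrow> (\<forall>n. Ck n p)"

lemma smooth_has_deriv: "smooth p \<Longrightarrow> ((deriv^^i) p has_real_derivative deriv ((deriv^^i) p) x) (at x)"
  unfolding smooth_def Ck_def by (metis funpow.simps(2) lessI o_apply)

lemma Suc_choose': "Suc n choose k = (n choose k) + (if k = 0 then 0 else (n choose (k-1)))"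
  by (cases k) simp_all

lemma sum_Suc_reindex':
  fixes f :: "nat \<Rightarrow> 'a::ab_group_add"
  shows "sum f {0..n} = f 0 - f (Suc n) + sum (\<lambda>i. f (Suc i)) {0..n}"
  by (induct n) auto

lemma leibniz:
  assumes "smooth p" "smooth q"
  shows "(deriv ^^ n) (\<lambda>w. p w * q w) z =
           (\<Sum>i = 0..n. of_nat (n choose i) * (deriv ^^ i) p z * (deriv ^^ (n-i)) q z)"
proof (induction n arbitrary: z)
  case 0 then show ?case by simp
next
  case (Suc n z)
  have *: "\<And>n. ((deriv ^^ n) p has_field_derivative deriv ((deriv ^^ n) p) z) (at z)"
          "\<And>n. ((deriv ^^ n) q has_field_derivative deriv ((deriv ^^ n) q) z) (at z)"
    using assms smooth_has_deriv by auto
  have sumeq: "(\<Sum>i = 0..n.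
               of_nat (n choose i) * (deriv ((deriv ^^ i) p) z * (deriv ^^ (n-i)) q z + deriv ((deriv ^^ (n-i)) q) z * (deriv ^^ i) p z)) =
            q z * deriv ((deriv ^^ n) p) z + (\<Sum>i = 0..n. (deriv ^^ i) p z * (of_nat (Suc n choose i) * (deriv ^^ (Suc n - i)) q z))"
    apply (simp add: Suc_choose' algebra_simps sum.distrib)
    apply (subst (4) sum_Suc_reindex')
    apply (auto simp: algebra_simps Suc_diff_le intro: sum.cong)
    done
  have eq: "(deriv ^^ n) (\<lambda>w. p w * q w) = (\<lambda>w. (\<Sum>i = 0..n. of_nat (n choose i) * (deriv ^^ i) p w * (deriv ^^ (n-i)) q w))"
    using Suc.IH by auto
  have "((deriv ^^ n) (\<lambda>w. p w * q w) has_field_derivative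
         (\<Sum>i = 0..Suc n. (Suc n choose i) * (deriv ^^ i) p z * (deriv ^^ (Suc n - i)) q z))
        (at z)"
    unfolding eq
    apply (rule DERIV_cong)
     apply (rule derivative_eq_intros | simp)+
           apply (auto intro: DERIV_mult * )
    using sumeq by (simp add: algebra_simps)
  then show ?case
    unfolding funpow.simps o_apply
    by (simp add: DERIV_imp_deriv)
qed

definition cF :: "nat \<Rightarrow> real" where "cF n = (-1)^n / fact (Suc n)"

lemma exp_tail_sums: "(\<lambda>n. (-y)^(Suc n) /\<^sub>R fact (Suc n)) sums (exp (-y) - 1)"
proof -
  have "(\<lambda>n. (-y)^n /\<^sub>R fact n) sums exp (-y)" by (rule exp_converges)
  moreover have "exp (-y) = exp (-y) - 1 + (-y)^0 /\<^sub>R fact 0" by simp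
  ultimately show ?thesis using sums_Suc_iff[of "\<lambda>n. (-y)^n /\<^sub>R fact n" "exp (-y) - 1"] by metis
qed

lemma cF_aux: "y \<noteq> 0 \<Longrightarrow> ((-y)^(Suc n) /\<^sub>R fact (Suc n)) * (-1/y) = cF n * y^n"
proof -
  assume y: "y \<noteq> 0"
  have e0: "(-y)^n = (-1)^n * y^n" by (rule power_minus)
  have e1: "(-y)^Suc n = (-y) * (-y)^n" by (rule power_Suc)
  have "((-y)^(Suc n) /\<^sub>R fact (Suc n)) * (-1/y) = ((-y) * ((-1)^n * y^n)) / fact (Suc n) * (-1/y)"
    unfolding e1 e0 by (simp add: divide_inverse_commute)
  also have "\<dots> = ((-1)^n * y^n) / fact (Suc n) * (y / y)"
    by (simp only: divide_inverse mult_ac mult_minus_left mult_minus_right minus_minus)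
  also have "\<dots> = cF n * y^n" using y unfolding cF_def by simp
  finally show ?thesis .
qed

lemma F1_sums: "(\<lambda>n. cF n * y^n) sums F1 y"
proof (cases "y = 0")
  case True
  have "F1 0 = cF 0" by (simp add: F1_def cF_def)
  then show ?thesis using powser_sums_zero[of cF] True by simp
next
  case False
  have s: "(\<lambda>n. ((-y)^(Suc n) /\<^sub>R fact (Suc n)) * (-1/y)) sums ((exp (-y) - 1) * (-1/y))"
    by (rule sums_mult2[OF exp_tail_sums])
  have e1: "((-y)^(Suc n) /\<^sub>R fact (Suc n)) * (-1/y) = cF n * y^n" for n
    using False by (rule cF_aux)
  have e2: "(exp (-y) - 1) * (-1/y) = F1 y"
    using False by (simp add: F1_def divide_simps)
  show ?thesis using s unfolding e1 e2 .
qed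

lemma F1_powser: "F1 = (\<lambda>x. \<Sum>n. cF n * x^n)"
  using F1_sums sums_unique by (intro ext) auto

lemma cF_summable: "summable (\<lambda>n. cF n * y^n)"
  using F1_sums sums_summable by blast

lemma smooth_F1: "smooth F1"
  unfolding smooth_def F1_powser using Ck_powser cF_summable by blast

lemma F1_deriv0: "(deriv^^k) F1 0 = (-1)^k / real (Suc k)"
proof -
  have "(deriv^^k) F1 0 = (diffs^^k) cF 0"
    unfolding F1_powser powser_higher[OF cF_summable] by simp
  also have "\<dots> = fact k * cF k" by (simp add: diffs_iter)
  also have "\<dots> = (-1)^k / real (Suc k)"
  proof -
    have "fact (Suc k) = real (Suc k) * (fact k :: real)" by (rule fact_Suc)
    then show ?thesis unfolding cF_def by simp
  qed
  finally show ?thesis .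
qed

lemma F1_nonzero: "F1 v \<noteq> 0"
  by (auto simp: F1_def)

lemma deriv_power_iter:
  "(deriv^^i) (\<lambda>v::real. v^n) = (\<lambda>v. falling (real n) i * v^(n-i))"
proof (induction i)
  case 0 then show ?case by (simp add: falling_def)
next
  case (Suc i)
  have "deriv (\<lambda>v. falling (real n) i * v^(n-i)) v = falling (real n) (Suc i) * v^(n - Suc i)" for v
  proof (cases "i < n")
    case True
    have "((\<lambda>v. falling (real n) i * v^(n-i)) has_real_derivative falling (real n) i * (real (n-i) * v^(n-i-1))) (at v)"
      by (auto intro!: derivative_eq_intros)
    moreover have "falling (real n) i * (real (n-i) * v^(n-i-1)) = falling (real n) (Suc i) * v^(n - Suc i)"
      using True by (simp add: falling_def of_nat_diff)
    ultimately show ?thesis by (metis DERIV_imp_deriv)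
  next
    case False
    have z: "falling (real n) i' = 0" if "i' > n" for i'
      unfolding falling_def using that by (intro prod_zero) (auto intro!: bexI[of _ n])
    have "n - i = 0" using False by simp
    then have "deriv (\<lambda>v. falling (real n) i * v^(n-i)) v = 0" by simp
    moreover have "falling (real n) (Suc i) = 0" using False z[of "Suc i"] by simp
    ultimately show ?thesis by simp
  qed
  then show ?case using Suc by (intro ext) simp
qed

lemma G_eq: "j \<ge> 1 \<Longrightarrow> G j = (\<lambda>v. v^(j-1) * inverse (F1 v))"
proof (intro ext)
  fix v :: real assume j: "j \<ge> 1"
  show "G j v = v^(j-1) * inverse (F1 v)"
  proof (cases "v = 0")
    case True then show ?thesis using j by (auto simp: G_def F1_def)
  next
    case False
    have "v^j = v^(j-1) * v" using j by (metis One_nat_def Suc_pred less_eq_Suc_le power_Suc2)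
    then show ?thesis using False by (simp add: G_def F1_def)
  qed
qed

lemma smooth_G: "j \<ge> 1 \<Longrightarrow> smooth (G j)"
  unfolding smooth_def G_eq
proof
  fix n assume "j \<ge> 1"
  have "Ck n F1" using smooth_F1 by (simp add: smooth_def)
  then show "Ck n (\<lambda>v. v^(j-1) * inverse (F1 v))"
    using F1_nonzero by (intro Ck_mult Ck_power Ck_inverse)
qed

lemma G_rel:
  assumes "j \<ge> 1"
  shows "(\<Sum>i = 0..k. of_nat (k choose i) * (deriv ^^ i) (G j) v * (deriv ^^ (k-i)) F1 v)
         = falling (real (j-1)) k * v^(j-1-k)"
proof -
  have "(\<lambda>w. G j w * F1 w) = (\<lambda>w. w^(j-1))"
    using G_eq[OF assms] F1_nonzero by auto
  then have "(deriv ^^ k)(\<lambda>w. G j w * F1 w) v = (deriv^^k)(\<lambda>w. w^(j-1)) v" by (simp only:)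
  then show ?thesis
    using leibniz[OF smooth_G[OF assms] smooth_F1, of k v] deriv_power_iter[of k "j-1"]
    by (simp only:)
qed


lemma falling_zero: "i > n \<Longrightarrow> falling (real n) i = 0"
  unfolding falling_def by (intro prod_zero) (auto intro!: bexI[of _ n])

lemma falling_self: "falling (real n) n = fact n"
proof -
  have "falling (real n) n = (\<Prod>i<n. real (n - i))"
    unfolding falling_def by (intro prod.cong) (auto simp: of_nat_diff)
  also have "\<dots> = real (\<Prod>i = 0..<n. n - i)" by (simp add: lessThan_atLeast0)
  also have "\<dots> = fact n" by (simp only: fact_prod_rev)
  finally show ?thesis .
qed

lemma det_formula:
  assumes j: "j \<ge> 1"
  shows "(deriv ^^ k) (G j) v = (-1) ^ k / (F1 v) ^ (k + 1) * det (M j k v)"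
proof -
  define A :: "real mat" where "A = mat (k+1) (k+1) (\<lambda>(i,m). if m \<le> i then real (i choose m) * (deriv^^(i-m)) F1 v else 0)"
  define x :: "real vec" where "x = vec (k+1) (\<lambda>i. (deriv^^i) (G j) v)"
  have A: "A \<in> carrier_mat (k+1) (k+1)" by (simp add: A_def)
  have x: "x \<in> carrier_vec (k+1)" by (simp add: x_def)
  have Ax: "A *\<^sub>v x = vec (k+1) (\<lambda>i. falling (real (j-1)) i * v^(j-1-i))"
  proof (rule eq_vecI)
    show "dim_vec (A *\<^sub>v x) = dim_vec (vec (k+1) (\<lambda>i. falling (real (j-1)) i * v^(j-1-i)))"
      using A by simp
  next
    fix i assume "i < dim_vec (vec (k+1) (\<lambda>i. falling (real (j-1)) i * v^(j-1-i)))"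
    then have i: "i < k+1" by simp
    have "(A *\<^sub>v x) $ i = (\<Sum>m\<in>{0..<k+1}. A $$ (i,m) * x $ m)"
      using A x i by (simp add: mult_mat_vec_def scalar_prod_def)
    also have "\<dots> = (\<Sum>m\<in>{0..<k+1}. if m \<in> {..i} then real (i choose m) * (deriv ^^ m) (G j) v * (deriv ^^ (i-m)) F1 v else 0)"
      using i by (intro sum.cong) (auto simp: A_def x_def)
    also have "\<dots> = (\<Sum>m\<in>{0..<k+1} \<inter> {..i}. real (i choose m) * (deriv ^^ m) (G j) v * (deriv ^^ (i-m)) F1 v)"
      by (rule sum.inter_restrict[symmetric]) simp
    also have "{0..<k+1} \<inter> {..i} = {0..i}" using i by auto
    also have "(\<Sum>m\<in>{0..i}. real (i choose m) * (deriv ^^ m) (G j) v * (deriv ^^ (i-m)) F1 v) = falling (real (j-1)) i * v^(j-1-i)"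
      by (rule G_rel[OF j])
    finally show "(A *\<^sub>v x) $ i = vec (k+1) (\<lambda>i. falling (real (j-1)) i * v^(j-1-i)) $ i"
      using i by simp
  qed
  have diag0: "diag_mat A = map (\<lambda>i. F1 v) [0..<k+1]"
    unfolding diag_mat_def A_def by (intro map_cong) auto
  have diag: "diag_mat A = replicate (k+1) (F1 v)"
    unfolding diag0 map_replicate_const by simp
  have detA: "det A = F1 v ^ (k+1)"
  proof -
    have "det A = prod_list (diag_mat A)" by (rule det_lower_triangular[OF _ A]) (simp add: A_def)
    then show ?thesis by (simp add: diag prod_list_replicate)
  qed
  define R where "R = replace_col A (A *\<^sub>v x) k"
  have R: "R \<in> carrier_mat (k+1) (k+1)" using A by (simp add: R_def replace_col_def)
  have cr: "det R = x $ k * det A" unfolding R_def by (rule cramer_lemma_mat[OF A x]) simp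
  have sw: "det (swap_col_to_front R k) = (-1)^k * det R" by (rule swap_col_to_front_det[OF R]) simp
  have fz: "falling (real (j-1)) i = 0" if "\<not> i < j" for i
    using that j by (intro falling_zero) auto
  have rj: "real j - 1 = real (j-1)" using j by (simp add: of_nat_diff)
  have SM: "swap_col_to_front R k = M j k v"
  proof -
    have "swap_col_to_front R k = mat (k+1) (k+1) (\<lambda>(i,l). if l = 0 then R $$ (i,k)
       else if l \<le> k then R $$ (i, l-1) else R $$ (i,l))"
      by (rule swap_col_to_front_result[OF R]) simp
    also have "\<dots> = M j k v"
    proof (rule eq_matI)
      fix i l assume i: "i < dim_row (M j k v)" and l: "l < dim_col (M j k v)"
      then have i': "i < k+1" and l': "l < k+1" by (auto simp: M_def)
      show "mat (k+1) (k+1) (\<lambda>(i,l). if l = 0 then R $$ (i,k)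
       else if l \<le> k then R $$ (i, l-1) else R $$ (i,l)) $$ (i,l) = M j k v $$ (i,l)"
      proof (cases "l = 0")
        case True
        have L: "mat (k+1) (k+1) (\<lambda>(i,l). if l = 0 then R $$ (i,k)
          else if l \<le> k then R $$ (i, l-1) else R $$ (i,l)) $$ (i,l) = R $$ (i,k)"
          using i' l' True by simp
        have R1: "R $$ (i,k) = falling (real (j-1)) i * v^(j-1-i)"
          using i' A by (simp add: R_def replace_col_def Ax)
        have M1: "M j k v $$ (i,l) = (if i < j then falling (real j - 1) i * v^(j-1-i) else 0)"
          using i' l' True by (simp add: M_def)
        show ?thesis unfolding L R1 M1 rj using fz[of i] by simp
      next
        case False
        have L: "mat (k+1) (k+1) (\<lambda>(i,l). if l = 0 then R $$ (i,k)
          else if l \<le> k then R $$ (i, l-1) else R $$ (i,l)) $$ (i,l) = R $$ (i,l-1)"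
          using i' l' False by simp
        have R1: "R $$ (i,l-1) = A $$ (i,l-1)"
        proof -
          have "l - 1 \<noteq> k" using l' False by arith
          then show ?thesis using i' l' A by (simp add: R_def replace_col_def)
        qed
        have A1: "A $$ (i,l-1) = (if l - 1 \<le> i then real (i choose (l-1)) * (deriv^^(i-(l-1))) F1 v else 0)"
          using i' l' by (simp add: A_def)
        have M1: "M j k v $$ (i,l) = (if l - 1 \<le> i then real (i choose (l - 1)) * (deriv ^^ (i + 1 - l)) F1 v else 0)"
          using i' l' False by (simp add: M_def)
        have e: "i - (l-1) = i + 1 - l" using False by arith
        show ?thesis unfolding L R1 A1 M1 e ..
      qed
    qed (auto simp: M_def)
    finally show ?thesis .
  qed
  have dM: "det (M j k v) = (-1)^k * ((deriv^^k) (G j) v * F1 v ^ (k+1))"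
    using sw cr detA SM by (simp add: x_def)
  have m1: "(-1::real)^k * (-1)^k = 1"
  proof -
    have "(-1::real)^k * (-1)^k = ((-1)*(-1))^k" by (simp only: power_mult_distrib)
    then show ?thesis by simp
  qed
  have "(-1) ^ k / (F1 v) ^ (k + 1) * det (M j k v)
        = ((-1)^k * (-1)^k) * (deriv^^k) (G j) v * (F1 v ^ (k+1) / F1 v ^ (k+1))"
    unfolding dM by (simp add: field_simps)
  also have "\<dots> = (deriv^^k) (G j) v" using F1_nonzero[of v] m1 by simp
  finally show ?thesis by simp
qed

lemma sum_shift_zero:
  fixes a :: "nat \<Rightarrow> real"
  assumes "\<And>i. i < n \<Longrightarrow> a i = 0"
  shows "(\<Sum>i=0..n+t. a i) = (\<Sum>s=0..t. a (n+s))"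
proof (induction t)
  case 0
  have "(\<Sum>i=0..n. a i) = (\<Sum>i\<in>insert n {0..<n}. a i)"
    by (intro sum.cong) auto
  also have "\<dots> = a n + (\<Sum>i\<in>{0..<n}. a i)" by (simp add: sum.insert)
  also have "(\<Sum>i\<in>{0..<n}. a i) = 0" using assms by (intro sum.neutral) auto
  finally show ?case by simp
next
  case (Suc t)
  have "(\<Sum>i=0..n+Suc t. a i) = (\<Sum>i=0..n+t. a i) + a (n + Suc t)"
    by (simp add: sum.atLeast0_atMost_Suc)
  also have "\<dots> = (\<Sum>s=0..t. a (n+s)) + a (n + Suc t)" by (simp only: Suc)
  also have "\<dots> = (\<Sum>s=0..Suc t. a (n+s))" by (simp add: sum.atLeast0_atMost_Suc)
  finally show ?case .
qed

lemma binom_real: "k \<le> N \<Longrightarrow> real (N choose k) * (fact k * fact (N-k)) = fact N"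
  using binomial_fact[of k N, where 'a=real] by (simp add: field_simps)

lemma cancel_fact: "(x::real) * fact n = y * fact n \<Longrightarrow> x = y" by simp

lemma c21: "real (Suc (Suc n) choose n) = real (Suc (Suc n)) * real (Suc n) / 2"
proof -
  have "fact (Suc (Suc n) - n) = (2::real)" by (simp add: numeral_2_eq_2)
  then have "real (Suc (Suc n) choose n) * 2 * fact n = fact (Suc (Suc n))"
    using binom_real[of n "Suc (Suc n)"] by (simp add: algebra_simps)
  also have "fact (Suc (Suc n)) = (real (Suc (Suc n)) * real (Suc n) / 2 * 2) * (fact n :: real)"
    by (simp add: fact_Suc del: of_nat_Suc)
  finally show ?thesis by (metis cancel_fact mult_cancel_right nonzero_mult_div_cancel_right zero_neq_numeral)
qed

lemma cgen: "k \<le> N \<Longrightarrow> real (N choose k) * (fact k * fact (N-k)) = fact N"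
  by (rule binom_real)

lemma c22: "real (Suc (Suc n) choose Suc n) = real (Suc (Suc n))"
proof -
  have "Suc (Suc n) choose Suc n = Suc (Suc n) choose (Suc (Suc n) - Suc n)" by (rule binomial_symmetric) simp
  then show ?thesis by simp
qed

lemma c33: "real (Suc (Suc (Suc n)) choose Suc (Suc n)) = real (Suc (Suc (Suc n)))"
proof -
  have "Suc (Suc (Suc n)) choose Suc (Suc n) = Suc (Suc (Suc n)) choose (Suc (Suc (Suc n)) - Suc (Suc n))" by (rule binomial_symmetric) simp
  then show ?thesis by simp
qed

lemma c32: "real (Suc (Suc (Suc n)) choose Suc n) = real (Suc (Suc (Suc n))) * real (Suc (Suc n)) / 2"
proof -
  have "fact (Suc (Suc (Suc n)) - Suc n) = (2::real)" by (simp add: numeral_2_eq_2)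
  then have "real (Suc (Suc (Suc n)) choose Suc n) * 2 * fact (Suc n) = fact (Suc (Suc (Suc n)))"
    using binom_real[of "Suc n" "Suc (Suc (Suc n))"] by (simp add: algebra_simps)
  also have "fact (Suc (Suc (Suc n))) = (real (Suc (Suc (Suc n))) * real (Suc (Suc n)) / 2 * 2) * (fact (Suc n) :: real)"
    by (simp add: fact_Suc[of "Suc (Suc n)"] fact_Suc[of "Suc n"] del: of_nat_Suc fact_Suc)
  finally show ?thesis by (metis cancel_fact mult_cancel_right nonzero_mult_div_cancel_right zero_neq_numeral)
qed

lemma c31: "real (Suc (Suc (Suc n)) choose n) = real (Suc (Suc (Suc n))) * real (Suc (Suc n)) * real (Suc n) / 6"
proof -
  have "fact (Suc (Suc (Suc n)) - n) = (6::real)" by (simp add: numeral_3_eq_3 eval_nat_numeral)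
  then have "real (Suc (Suc (Suc n)) choose n) * 6 * fact n = fact (Suc (Suc (Suc n)))"
    using binom_real[of n "Suc (Suc (Suc n))"] by (simp add: algebra_simps)
  also have "fact (Suc (Suc (Suc n))) = (real (Suc (Suc (Suc n))) * real (Suc (Suc n)) * real (Suc n) / 6 * 6) * (fact n :: real)"
    by (simp add: fact_Suc del: of_nat_Suc)
  finally show ?thesis by (metis cancel_fact mult_cancel_right nonzero_mult_div_cancel_right zero_neq_numeral)
qed

lemma alg2:
  fixes F G1 G2 :: real
  assumes g1: "G1 = real (Suc n) * F / 2"
    and e: "(real (Suc (Suc n)) * real (Suc n) / 2) * F * ((-1)^2 / real (Suc 2)) + real (Suc (Suc n)) * G1 * ((-1)^1 / real (Suc 1)) + G2 = 0"
  shows "G2 = real (Suc (Suc n)) * real (Suc n) * F / 12"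
  using e unfolding g1 by (simp add: field_simps) 

lemma alg3:
  fixes F G1 G2 G3 :: real
  assumes g1: "G1 = real (Suc n) * F / 2"
    and g2: "G2 = real (Suc (Suc n)) * real (Suc n) * F / 12"
    and e: "(real (Suc (Suc (Suc n))) * real (Suc (Suc n)) * real (Suc n) / 6) * F * ((-1)^3 / real (Suc 3))
      + (real (Suc (Suc (Suc n))) * real (Suc (Suc n)) / 2) * G1 * ((-1)^2 / real (Suc 2))
      + real (Suc (Suc (Suc n))) * G2 * ((-1)^1 / real (Suc 1)) + G3 = 0"
  shows "G3 = 0"
  using e unfolding g1 g2 by (simp add: field_simps) 

lemma values_at_0:
  fixes n :: nat
  defines "g \<equiv> \<lambda>i. (deriv ^^ i) (G (Suc n)) 0"
  shows "(\<forall>i<n. g i = 0) \<and> g n = fact n \<and> g (Suc n) = fact (Suc n) / 2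
         \<and> g (Suc (Suc n)) = fact (Suc (Suc n)) / 12 \<and> g (Suc (Suc (Suc n))) = 0"
proof -
  have j: "Suc n \<ge> 1" by simp
  define h where "h = (\<lambda>m. (-1::real)^m / real (Suc m))"
  have rel: "(\<Sum>i = 0..k. real (k choose i) * g i * h (k-i)) = falling (real n) k * 0^(n-k)" for k
    using G_rel[OF j, of k 0] unfolding g_def h_def F1_deriv0 by simp
  have z: "\<forall>i<n. g i = 0"
  proof (intro allI impI)
    fix i show "i < n \<Longrightarrow> g i = 0"
    proof (induction i rule: less_induct)
      case (less i)
      have "(\<Sum>m = 0..i. real (i choose m) * g m * h (i-m)) = (\<Sum>m\<in>insert i {0..<i}. real (i choose m) * g m * h (i-m))"
        by (intro sum.cong) auto
      also have "\<dots> = g i * h 0 + (\<Sum>m\<in>{0..<i}. real (i choose m) * g m * h (i-m))" by (simp add: sum.insert)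
      also have "(\<Sum>m\<in>{0..<i}. real (i choose m) * g m * h (i-m)) = 0"
        using less by (intro sum.neutral) auto
      finally have "g i * h 0 = falling (real n) i * 0^(n-i)" using rel[of i] by simp
      moreover have "(0::real)^(n-i) = 0" using less.prems by simp
      ultimately show ?case by (simp add: h_def)
    qed
  qed
  define a where "a = (\<lambda>t i. real ((n+t) choose i) * g i * h (n+t-i))"
  have a0: "a t i = 0" if "i < n" for t i using z that by (simp add: a_def)
  have relt: "(\<Sum>s=0..t. a t (n+s)) = falling (real n) (n+t) * 0^(n-(n+t))" for t
    using sum_shift_zero[of n "a t" t, OF a0] rel[of "n+t"] by (simp add: a_def)
  have f0: "falling (real n) (n+t) = 0" if "t > 0" for t using that by (intro falling_zero) simp
  have g0: "g n = fact n" using relt[of 0] falling_self[of n] by (simp add: a_def h_def)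
  have e1: "g n * real (Suc n) * h 1 + g (Suc n) = 0"
    using relt[of 1] f0[of 1] by (simp add: a_def h_def)
  have g1: "g (Suc n) = fact (Suc n) / 2"
    using e1 g0 by (simp add: h_def field_simps)
  have h0: "h 0 = 1" by (simp add: h_def)
  have e2: "real (Suc (Suc n) choose n) * g n * h 2 + real (Suc (Suc n) choose Suc n) * g (Suc n) * h 1 + g (Suc (Suc n)) = 0"
    using relt[of "Suc (Suc 0)"] f0[of "Suc (Suc 0)"] by (simp add: a_def h0 sum.atLeast0_atMost_Suc numeral_2_eq_2)
  have e3: "real (Suc (Suc (Suc n)) choose n) * g n * h 3 + real (Suc (Suc (Suc n)) choose Suc n) * g (Suc n) * h 2
     + real (Suc (Suc (Suc n)) choose Suc (Suc n)) * g (Suc (Suc n)) * h 1 + g (Suc (Suc (Suc n))) = 0"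
    using relt[of "Suc (Suc (Suc 0))"] f0[of "Suc (Suc (Suc 0))"]
    by (simp add: a_def h0 sum.atLeast0_atMost_Suc numeral_3_eq_3 numeral_2_eq_2)
  have g1': "g (Suc n) = real (Suc n) * fact n / 2" using g1 by simp
  have g2': "g (Suc (Suc n)) = real (Suc (Suc n)) * real (Suc n) * fact n / 12"
    by (rule alg2[OF g1']) (use e2 in \<open>simp only: c21 c22 g0 h_def\<close>)
  have g3: "g (Suc (Suc (Suc n))) = 0"
    by (rule alg3[OF g1' g2']) (use e3 in \<open>simp only: c31 c32 c33 g0 h_def\<close>)
  have g2: "g (Suc (Suc n)) = fact (Suc (Suc n)) / 12"
    unfolding g2' by (simp add: fact_Suc[of "Suc n"] fact_Suc[of n] del: fact_Suc of_nat_Suc)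
  show ?thesis using z g0 g1 g2 g3 by blast
qed

theorem theorem5p1:
  fixes j :: nat
  assumes "j \<ge> 1"
  shows "(\<forall>k v. (deriv ^^ k) (G j) v = (-1) ^ k / (F1 v) ^ (k + 1) * det (M j k v))
       \<and> (\<forall>v. f j v = (-1) ^ j / (F1 v) ^ (j + 1) * det (M j j v))
       \<and> (\<forall>k < j - 1. (deriv ^^ k) (G j) 0 = 0)
       \<and> (deriv ^^ (j - 1)) (G j) 0 = fact (j - 1)
       \<and> (deriv ^^ j) (G j) 0 = fact j / 2
       \<and> f j 0 = fact j / 2
       \<and> (deriv ^^ (j + 1)) (G j) 0 = fact (j + 1) / 12
       \<and> deriv (f j) 0 = fact (j + 1) / 12
       \<and> (deriv ^^ (j + 2)) (G j) 0 = 0"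
proof -
  obtain n where jn: "j = Suc n" using assms by (cases j) auto
  have A: "\<forall>k v. (deriv ^^ k) (G j) v = (-1) ^ k / (F1 v) ^ (k + 1) * det (M j k v)"
    using det_formula[OF assms] by blast
  have B: "\<forall>v. f j v = (-1) ^ j / (F1 v) ^ (j + 1) * det (M j j v)"
    unfolding f_def using det_formula[OF assms] by blast
  have V: "(\<forall>i<n. (deriv ^^ i) (G (Suc n)) 0 = 0) \<and> (deriv ^^ n) (G (Suc n)) 0 = fact n
      \<and> (deriv ^^ Suc n) (G (Suc n)) 0 = fact (Suc n) / 2
      \<and> (deriv ^^ Suc (Suc n)) (G (Suc n)) 0 = fact (Suc (Suc n)) / 12
      \<and> (deriv ^^ Suc (Suc (Suc n))) (G (Suc n)) 0 = 0"
    using values_at_0[of n] by simp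
  have D: "deriv (f j) 0 = (deriv ^^ Suc j) (G j) 0" unfolding f_def by simp
  have j1: "j - 1 = n" "j + 1 = Suc (Suc n)" "j + 2 = Suc (Suc (Suc n))" using jn by simp_all
  show ?thesis
    unfolding j1 D
    using A B V unfolding f_def jn by simp
qed

end
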